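(* Let $H=([t],E)$ be a hypergraph on vertex set $[t]=\{1,\dots,t\}$ in which every edge $e\in E$ is a subset of $[t]$ with $2\le |e|$, and let $d$ be the maximal edge size. Let $f:\{0,1\}^n\to\{-1,1\}$. Consider the test: choose $x_1,\dots,x_t\in\{0,1\}^n$ independently and uniformly at random, and accept iff for every $e\in E$, $$\prod_{i\in e} f(x_i)\cdot f\Big(\sum_{i\in e}x_i\Big)=f(0)^{|e|+1}.$$ Then the probability that this test accepts $f$ is at most $\frac{1}{2^{|E|}}+\|f\|_{U_d}$.
   Context: $\{0,1\}^n$ is identified with $\mathbb F_2^n$ (addition coordinatewise mod 2). For $f:\{0,1\}^n\to\mathbb R$ and integer $d\ge1$, the $d$-th Gowers uniformity norm is $$\|f\|_{U_d}=\Big[\mathbb E_{x,y_1,\dots,y_d}\prod_{S\subseteq[d]} f\Big(x+\sum_{i\in S}y_i\Big)\Big]^{1/2^d},$$ with $x,y_1,\dots,y_d$ independent and uniform in $\{0,1\}^n$. *)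

theory Defs
  imports Complex_Main "HOL-Library.FuncSet"
begin

text \<open>Elements of {0,1}^n = F_2^n are represented as functions nat => bool
  vanishing (False) outside {0..<n}.\<close>

definition cube :: "nat \<Rightarrow> (nat \<Rightarrow> bool) set" where
  "cube n = {x. \<forall>i\<ge>n. x i = False}"

definition vzero :: "nat \<Rightarrow> bool" where
  "vzero = (\<lambda>_. False)"

definition vadd :: "(nat \<Rightarrow> bool) \<Rightarrow> (nat \<Rightarrow> bool) \<Rightarrow> (nat \<Rightarrow> bool)" where
  "vadd x y = (\<lambda>j. x j \<noteq> y j)"

definition vsum :: "'i set \<Rightarrow> ('i \<Rightarrow> nat \<Rightarrow> bool) \<Rightarrow> (nat \<Rightarrow> bool)" where
  "vsum S y = (\<lambda>j. odd (card {i\<in>S. y i j}))"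

definition gowers_norm :: "nat \<Rightarrow> nat \<Rightarrow> ((nat \<Rightarrow> bool) \<Rightarrow> real) \<Rightarrow> real" where
  "gowers_norm n d f =
     root (2 ^ d)
       ((\<Sum>x\<in>cube n. \<Sum>y\<in>PiE {1..d} (\<lambda>_. cube n).
            \<Prod>S\<in>Pow {1..d}. f (vadd x (vsum S y)))
        / real (card (cube n) * card (PiE {1..d} (\<lambda>_. cube n))))"

definition accept_prob :: "nat \<Rightarrow> nat \<Rightarrow> nat set set \<Rightarrow> ((nat \<Rightarrow> bool) \<Rightarrow> real) \<Rightarrow> real" where
  "accept_prob n t E f =
     real (card {x \<in> PiE {1..t} (\<lambda>_. cube n).
             \<forall>e\<in>E. (\<Prod>i\<in>e. f (x i)) * f (vsum e x) = f vzero ^ (card e + 1)})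
     / real (card (PiE {1..t} (\<lambda>_. cube n)))"

end

theory Submission
  imports Defs
begin


lemma cube_eq: "cube n = (\<lambda>S i. i \<in> S) ` Pow {..<n}"
proof
  show "cube n \<subseteq> (\<lambda>S i. i \<in> S) ` Pow {..<n}"
  proof
    fix x assume x: "x \<in> cube n"
    have "x = (\<lambda>i. i \<in> {i. x i})" by auto
    moreover have "{i. x i} \<subseteq> {..<n}" using x unfolding cube_def by (auto simp: not_less[symmetric])
    ultimately show "x \<in> (\<lambda>S i. i \<in> S) ` Pow {..<n}" by blast
  qed
qed (auto simp: cube_def)

lemma finite_cube[simp]: "finite (cube n)"
  by (simp add: cube_eq)

lemma vzero_cube[simp]: "vzero \<in> cube n"
  by (simp add: cube_def vzero_def)

lemma cube_ne[simp]: "cube n \<noteq> {}"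
  using vzero_cube by blast

lemma card_cube_pos: "0 < card (cube n)"
  using finite_cube cube_ne card_gt_0_iff by blast

lemma vadd_cube[simp]: "x \<in> cube n \<Longrightarrow> y \<in> cube n \<Longrightarrow> vadd x y \<in> cube n"
  by (simp add: cube_def vadd_def)

lemma vsum_cube: "(\<And>i. i \<in> S \<Longrightarrow> y i \<in> cube n) \<Longrightarrow> vsum S y \<in> cube n"
proof -
  assume a: "\<And>i. i \<in> S \<Longrightarrow> y i \<in> cube n"
  { fix j assume "n \<le> j"
    then have "{i\<in>S. y i j} = {}" using a unfolding cube_def by auto
    then have "vsum S y j = False" unfolding vsum_def by (simp only:) simp }
  then show ?thesis unfolding cube_def by auto
qed

lemma vadd_comm: "vadd x y = vadd y x" unfolding vadd_def by auto
lemma vadd_assoc: "vadd (vadd x y) z = vadd x (vadd y z)" unfolding vadd_def by auto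
lemma vadd_zero[simp]: "vadd vzero x = x" "vadd x vzero = x" unfolding vadd_def vzero_def by auto
lemma vadd_self[simp]: "vadd x x = vzero" unfolding vadd_def vzero_def by auto

lemma vsum_empty[simp]: "vsum {} y = vzero"
  unfolding vsum_def vzero_def by simp

lemma vsum_cong: "(\<And>i. i \<in> S \<Longrightarrow> y i = y' i) \<Longrightarrow> vsum S y = vsum S y'"
  unfolding vsum_def by (rule ext) (metis (mono_tags, lifting) Collect_cong)

lemma vsum_insert:
  assumes "finite S" "k \<notin> S"
  shows "vsum (insert k S) y = vadd (y k) (vsum S y)"
proof (rule ext)
  fix j
  have "finite {i\<in>S. y i j}" using assms by auto
  moreover have "{i\<in>insert k S. y i j} = (if y k j then insert k {i\<in>S. y i j} else {i\<in>S. y i j})"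
    by auto
  ultimately show "vsum (insert k S) y j = vadd (y k) (vsum S y) j"
    using assms unfolding vsum_def vadd_def by auto
qed

definition avg :: "'a set \<Rightarrow> ('a \<Rightarrow> real) \<Rightarrow> real" where
  "avg A g = (\<Sum>a\<in>A. g a) / real (card A)"

lemma avg_cong: "(\<And>a. a \<in> A \<Longrightarrow> g a = g' a) \<Longrightarrow> avg A g = avg A g'"
  unfolding avg_def by (metis sum.cong)

lemma avg_mono: "(\<And>a. a \<in> A \<Longrightarrow> g a \<le> g' a) \<Longrightarrow> avg A g \<le> avg A g'"
  unfolding avg_def by (intro divide_right_mono sum_mono) auto

lemma avg_const: "finite A \<Longrightarrow> A \<noteq> {} \<Longrightarrow> avg A (\<lambda>_. c) = c"
  unfolding avg_def by simp

lemma avg_cmult: "avg A (\<lambda>a. c * g a) = c * avg A g"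
  unfolding avg_def by (simp add: sum_distrib_left)

lemma avg_multc: "avg A (\<lambda>a. g a * c) = avg A g * c"
  unfolding avg_def by (simp add: sum_distrib_right)

lemma avg_abs: "\<bar>avg A g\<bar> \<le> avg A (\<lambda>a. \<bar>g a\<bar>)"
  unfolding avg_def by (simp add: divide_right_mono sum_abs)

lemma avg_swap: "avg A (\<lambda>a. avg B (\<lambda>b. g a b)) = avg B (\<lambda>b. avg A (\<lambda>a. g a b))"
  unfolding avg_def by (simp add: sum_divide_distrib[symmetric] sum.swap[of _ A B])

lemma avg_sumdiff: "avg A (\<lambda>a. g a - h a) = avg A g - avg A h"
  unfolding avg_def by (simp add: sum_subtractf diff_divide_distrib)

lemma avg_add: "avg A (\<lambda>a. g a + h a) = avg A g + avg A h"
  unfolding avg_def by (simp add: sum.distrib add_divide_distrib)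

lemma avg_translate:
  assumes "z \<in> cube n"
  shows "avg (cube n) (\<lambda>h. g (vadd z h)) = avg (cube n) g"
proof -
  have "(\<Sum>h\<in>cube n. g (vadd z h)) = (\<Sum>h\<in>cube n. g h)"
    by (rule sum.reindex_bij_witness[where i="vadd z" and j="vadd z"])
       (use assms in \<open>auto simp: vadd_assoc[symmetric]\<close>)
  then show ?thesis unfolding avg_def by simp
qed

lemma avg_nonneg: "(\<And>a. a \<in> A \<Longrightarrow> 0 \<le> g a) \<Longrightarrow> 0 \<le> avg A g"
  unfolding avg_def by (simp add: sum_nonneg)

lemma avg_CS:
  assumes "finite A" "A \<noteq> {}"
  shows "(avg A g)^2 \<le> avg A (\<lambda>a. (g a)^2)"
proof -
  define m where "m = avg A g"
  have "0 \<le> avg A (\<lambda>a. (g a - m)^2)" by (rule avg_nonneg) simp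
  also have "avg A (\<lambda>a. (g a - m)^2) = avg A (\<lambda>a. (g a)^2 + (- 2 * m) * g a + m^2)"
    by (rule avg_cong) (simp add: power2_eq_square algebra_simps)
  also have "\<dots> = avg A (\<lambda>a. (g a)^2 + (- 2 * m) * g a) + m^2"
    using assms avg_add[of A "\<lambda>a. (g a)^2 + (- 2 * m) * g a" "\<lambda>_. m^2"] by (simp add: avg_const)
  also have "\<dots> = avg A (\<lambda>a. (g a)^2) + (- 2 * m) * m + m^2"
    using avg_add[of A "\<lambda>a. (g a)^2" "\<lambda>a. (- 2 * m) * g a"] avg_cmult[of A "- 2 * m" g]
    unfolding m_def by simp
  also have "\<dots> = avg A (\<lambda>a. (g a)^2) - m^2" by (simp add: power2_eq_square)
  finally show ?thesis by (simp add: m_def)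
qed

lemma avg_jensen:
  assumes "finite A" "A \<noteq> {}"
  shows "\<bar>avg A g\<bar> ^ (2^m) \<le> avg A (\<lambda>a. \<bar>g a\<bar> ^ (2^m))"
proof (induction m)
  case 0
  then show ?case using avg_abs by simp
next
  case (Suc m)
  have "\<bar>avg A g\<bar> ^ (2^Suc m) = (\<bar>avg A g\<bar> ^ (2^m))^2"
    by (simp add: power_mult[symmetric] mult.commute)
  also have "\<dots> \<le> (avg A (\<lambda>a. \<bar>g a\<bar> ^ (2^m)))^2"
    using Suc by (intro power_mono) auto
  also have "\<dots> \<le> avg A (\<lambda>a. (\<bar>g a\<bar> ^ (2^m))^2)"
    by (rule avg_CS[OF assms])
  also have "\<dots> = avg A (\<lambda>a. \<bar>g a\<bar> ^ (2^Suc m))"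
    by (simp add: power_mult[symmetric] mult.commute)
  finally show ?case .
qed

lemma avg_split:
  assumes "finite J" "k \<in> J"
  shows "avg (PiE J (\<lambda>_. cube n)) \<phi> =
         avg (PiE (J - {k}) (\<lambda>_. cube n)) (\<lambda>u. avg (cube n) (\<lambda>z. \<phi> (u(k := z))))"
proof -
  let ?V = "cube n" and ?P = "PiE (J - {k}) (\<lambda>_. cube n)"
  have J: "J = insert k (J - {k})" using assms by auto
  have inj: "inj_on (\<lambda>(y, g). g(k := y)) (?V \<times> ?P)"
    using inj_combinator[of k "J - {k}" "\<lambda>_. cube n"] by simp
  have eq: "PiE J (\<lambda>_. cube n) = (\<lambda>(y, g). g(k := y)) ` (?V \<times> ?P)"
    by (subst J) (rule PiE_insert_eq)
  have "(\<Sum>x\<in>PiE J (\<lambda>_. cube n). \<phi> x) = (\<Sum>p\<in>?V \<times> ?P. \<phi> ((\<lambda>(y, g). g(k := y)) p))"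
    unfolding eq by (rule sum.reindex[OF inj, unfolded comp_def])
  also have "\<dots> = (\<Sum>z\<in>?V. \<Sum>u\<in>?P. \<phi> (u(k := z)))"
    by (simp add: sum.cartesian_product split_def)
  also have "\<dots> = (\<Sum>u\<in>?P. \<Sum>z\<in>?V. \<phi> (u(k := z)))"
    by (rule sum.swap)
  finally have s: "(\<Sum>x\<in>PiE J (\<lambda>_. cube n). \<phi> x) = (\<Sum>u\<in>?P. \<Sum>z\<in>?V. \<phi> (u(k := z)))" .
  have c: "card (PiE J (\<lambda>_. cube n)) = card ?V * card ?P"
    unfolding eq using inj assms by (simp add: card_image card_cartesian_product)
  show ?thesis
    unfolding avg_def s c by (simp add: sum_divide_distrib[symmetric] mult.commute)
qed



fun GA :: "nat \<Rightarrow> nat \<Rightarrow> ((nat \<Rightarrow> bool) \<Rightarrow> real) \<Rightarrow> real" where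
  "GA n 0 f = avg (cube n) f"
| "GA n (Suc m) f = avg (cube n) (\<lambda>h. GA n m (\<lambda>y. f y * f (vadd y h)))"

definition GS :: "nat \<Rightarrow> nat set \<Rightarrow> ((nat \<Rightarrow> bool) \<Rightarrow> real) \<Rightarrow> real" where
  "GS n I f = avg (cube n) (\<lambda>x. avg (PiE I (\<lambda>_. cube n))
      (\<lambda>y. \<Prod>S\<in>Pow I. f (vadd x (vsum S y))))"

lemma prod_Pow_insert:
  assumes "finite I" "k \<notin> I"
  shows "(\<Prod>S\<in>Pow (insert k I). g S) = (\<Prod>S\<in>Pow I. g S * g (insert k S))"
proof -
  have "(\<Prod>S\<in>Pow (insert k I). g S) = (\<Prod>S\<in>Pow I. g S) * (\<Prod>S\<in>insert k ` Pow I. g S)"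
    unfolding Pow_insert by (rule prod.union_disjoint) (use assms in auto)
  also have "(\<Prod>S\<in>insert k ` Pow I. g S) = (\<Prod>S\<in>Pow I. g (insert k S))"
  proof (rule prod.reindex[unfolded comp_def])
    show "inj_on (insert k) (Pow I)"
      unfolding inj_on_def using assms by (metis PowD insert_ident subset_eq)
  qed
  finally show ?thesis by (simp add: prod.distrib)
qed

lemma GS_eq: "finite I \<Longrightarrow> GS n I f = GA n (card I) f"
proof (induction I arbitrary: f rule: finite_induct)
  case empty
  show ?case unfolding GS_def by (simp add: avg_def)
next
  case (insert k I)
  let ?V = "cube n" and ?P = "PiE I (\<lambda>_. cube n)"
  have "GS n (insert k I) f = avg ?V (\<lambda>x. avg ?P (\<lambda>u. avg ?V (\<lambda>h.
           \<Prod>S\<in>Pow (insert k I). f (vadd x (vsum S (u(k := h)))))))"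
    unfolding GS_def
    using avg_split[of "insert k I" k n] insert by (simp add: insert_Diff_if)
  also have "\<dots> = avg ?V (\<lambda>x. avg ?P (\<lambda>u. avg ?V (\<lambda>h.
           \<Prod>S\<in>Pow I. (\<lambda>y. f y * f (vadd y h)) (vadd x (vsum S u)))))"
  proof (intro avg_cong)
    fix x u h
    have "\<And>S. S \<in> Pow I \<Longrightarrow> vsum S (u(k := h)) = vsum S u"
      using insert by (intro vsum_cong) auto
    moreover have "\<And>S. S \<in> Pow I \<Longrightarrow> vsum (insert k S) (u(k := h)) = vadd h (vsum S u)"
    proof -
      fix S assume S: "S \<in> Pow I"
      then have "finite S" "k \<notin> S" using insert finite_subset by auto
      then have "vsum (insert k S) (u(k := h)) = vadd h (vsum S (u(k := h)))"
        by (simp add: vsum_insert)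
      also have "vsum S (u(k := h)) = vsum S u" using S insert by (intro vsum_cong) auto
      finally show "vsum (insert k S) (u(k := h)) = vadd h (vsum S u)" .
    qed
    moreover have "\<And>S. vadd x (vadd h (vsum S u)) = vadd (vadd x (vsum S u)) h"
      unfolding vadd_def by auto
    ultimately show "(\<Prod>S\<in>Pow (insert k I). f (vadd x (vsum S (u(k := h))))) =
           (\<Prod>S\<in>Pow I. (\<lambda>y. f y * f (vadd y h)) (vadd x (vsum S u)))"
      apply (subst prod_Pow_insert[OF insert(1,2)])
      apply (rule prod.cong[OF refl])
      subgoal premises p for S
        using p(1)[of S] p(2)[of S] p(3)[of S] p(4) by simp
      done
  qed
  also have "\<dots> = avg ?V (\<lambda>x. avg ?V (\<lambda>h. avg ?P (\<lambda>u.
           \<Prod>S\<in>Pow I. (\<lambda>y. f y * f (vadd y h)) (vadd x (vsum S u)))))"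
    by (intro avg_cong avg_swap)
  also have "\<dots> = avg ?V (\<lambda>h. GS n I (\<lambda>y. f y * f (vadd y h)))"
    unfolding GS_def by (rule avg_swap)
  also have "\<dots> = GA n (card (insert k I)) f"
    using insert by simp
  finally show ?case .
qed

lemma GA_one: "GA n (Suc 0) f = (avg (cube n) f)^2"
proof -
  have "GA n (Suc 0) f = avg (cube n) (\<lambda>y. avg (cube n) (\<lambda>h. f y * f (vadd y h)))"
    by (simp only: GA.simps) (rule avg_swap)
  also have "\<dots> = avg (cube n) (\<lambda>y. f y * avg (cube n) f)"
    by (intro avg_cong) (simp add: avg_cmult avg_translate)
  finally show ?thesis by (simp add: avg_multc power2_eq_square)
qed

lemma GA_sq: "(GA n m f)^2 \<le> GA n (Suc m) f"
proof (induction m arbitrary: f)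
  case 0
  then show ?case using GA_one by simp
next
  case (Suc m)
  have "(GA n (Suc m) f)^2 \<le> avg (cube n) (\<lambda>h. (GA n m (\<lambda>y. f y * f (vadd y h)))^2)"
    by (simp only: GA.simps) (rule avg_CS; simp)
  also have "\<dots> \<le> avg (cube n) (\<lambda>h. GA n (Suc m) (\<lambda>y. f y * f (vadd y h)))"
    by (rule avg_mono) (rule Suc)
  also have "\<dots> = GA n (Suc (Suc m)) f" by simp
  finally show ?case .
qed

lemma GA_nonneg: "0 \<le> GA n (Suc m) f"
  by (rule order_trans[OF _ GA_sq]) simp

lemma GA_root_mono:
  assumes "1 \<le> k" "k \<le> d"
  shows "root (2^k) (GA n k f) \<le> root (2^d) (GA n d f)"
  using assms(2)
proof (induction d rule: dec_induct)
  case base then show ?case by simp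
next
  case (step d)
  have d: "1 \<le> d" using assms step by simp
  then obtain d' where d': "d = Suc d'" by (cases d) auto
  have "root (2^d) (GA n d f) = root (2^d) (root 2 ((GA n d f)^2))"
    using GA_nonneg[of n d' f] d' by (simp add: real_root_power_cancel)
  also have "\<dots> = root (2^Suc d) ((GA n d f)^2)"
    by (simp add: real_root_mult_exp[symmetric] mult.commute)
  also have "\<dots> \<le> root (2^Suc d) (GA n (Suc d) f)"
    by (intro real_root_le_mono GA_sq) simp
  finally show ?case using step by simp
qed



lemma prod_abs_le1:
  fixes g :: "'a \<Rightarrow> real"
  assumes "\<And>q. q \<in> Q \<Longrightarrow> \<bar>g q\<bar> \<le> 1"
  shows "\<bar>\<Prod>q\<in>Q. g q\<bar> \<le> 1"
  unfolding abs_prod using assms by (intro prod_le_1) auto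

lemma PiE_upd_mem:
  assumes "u \<in> PiE (J - {k}) (\<lambda>_. cube n)" "k \<in> J" "z \<in> cube n"
  shows "u(k := z) \<in> PiE J (\<lambda>_. cube n)"
  using assms by (auto simp: PiE_def Pi_def extensional_def)

lemma PiE_upd_mem2:
  assumes "x \<in> PiE J (\<lambda>_. cube n)" "k \<in> J" "z \<in> cube n"
  shows "x(k := z) \<in> PiE J (\<lambda>_. cube n)"
  using assms by (auto simp: PiE_def Pi_def extensional_def)

lemma vsum_single: "vsum {k} y = y k"
  using vsum_insert[of "{}" k y] by simp

lemma gcs:
  assumes fin: "finite I" and ne: "I \<noteq> {}"
    and J: "finite J" and IJ: "I \<subseteq> J" and c: "c \<in> cube n" and Q: "finite Q"
    and sg: "\<And>q. q \<in> Q \<Longrightarrow> sg q \<in> I"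
    and hb: "\<And>q x. q \<in> Q \<Longrightarrow> x \<in> PiE J (\<lambda>_. cube n) \<Longrightarrow> \<bar>hh q x\<bar> \<le> 1"
    and hi: "\<And>q x z. q \<in> Q \<Longrightarrow> x \<in> PiE J (\<lambda>_. cube n) \<Longrightarrow> z \<in> cube n \<Longrightarrow>
               hh q (x(sg q := z)) = hh q x"
  shows "\<bar>avg (PiE J (\<lambda>_. cube n)) (\<lambda>x. f (vadd c (vsum I x)) * (\<Prod>q\<in>Q. hh q x))\<bar> ^ (2 ^ card I)
           \<le> GA n (card I) f"
  using fin ne J IJ c Q sg hb hi
proof (induction I arbitrary: J c f Q hh rule: finite_ne_induct)
  case (singleton k)
  let ?V = "cube n" and ?P = "PiE (J - {k}) (\<lambda>_. cube n)"
  have kJ: "k \<in> J" using singleton by auto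
  define G where "G u = (\<Prod>q\<in>Q. hh q (u(k := vzero)))" for u
  have froz: "hh q (u(k := z)) = hh q (u(k := vzero))"
    if "q \<in> Q" "u \<in> ?P" "z \<in> ?V" for q u z
  proof -
    have x: "u(k := vzero) \<in> PiE J (\<lambda>_. cube n)" using PiE_upd_mem[OF that(2) kJ] by simp
    have "sg q = k" using singleton that by auto
    then show ?thesis using singleton.prems(7)[OF that(1) x that(3)] by (metis fun_upd_upd)
  qed
  have "avg (PiE J (\<lambda>_. cube n)) (\<lambda>x. f (vadd c (vsum {k} x)) * (\<Prod>q\<in>Q. hh q x))
      = avg ?P (\<lambda>u. avg ?V (\<lambda>z. f (vadd c z) * G u))"
    unfolding avg_split[OF singleton.prems(1) kJ]
  proof (intro avg_cong)
    fix u z assume u: "u \<in> ?P" and z: "z \<in> ?V"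
    have "(\<Prod>q\<in>Q. hh q (u(k := z))) = G u"
      unfolding G_def by (rule prod.cong[OF refl]) (rule froz[OF _ u z])
    then show "f (vadd c (vsum {k} (u(k := z)))) * (\<Prod>q\<in>Q. hh q (u(k := z))) = f (vadd c z) * G u"
      by (simp add: vsum_single)
  qed
  also have "\<dots> = avg ?P (\<lambda>u. avg ?V f * G u)"
    by (intro avg_cong) (simp add: avg_multc avg_translate[OF singleton.prems(3)])
  also have "\<dots> = avg ?V f * avg ?P G" by (simp add: avg_cmult)
  finally have e: "avg (PiE J (\<lambda>_. cube n)) (\<lambda>x. f (vadd c (vsum {k} x)) * (\<Prod>q\<in>Q. hh q x))
      = avg ?V f * avg ?P G" .
  have Gb: "\<bar>avg ?P G\<bar> \<le> 1"
  proof -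
    have "\<bar>avg ?P G\<bar> \<le> avg ?P (\<lambda>u. \<bar>G u\<bar>)" by (rule avg_abs)
    also have "\<dots> \<le> avg ?P (\<lambda>u. 1)"
    proof (rule avg_mono)
      fix u assume u: "u \<in> ?P"
      have x: "u(k := vzero) \<in> PiE J (\<lambda>_. cube n)" using PiE_upd_mem[OF u kJ] by simp
      show "\<bar>G u\<bar> \<le> 1" unfolding G_def
        by (rule prod_abs_le1) (rule singleton.prems(6)[OF _ x])
    qed
    also have "\<dots> = 1" using singleton.prems(1) by (intro avg_const) (auto simp: PiE_eq_empty_iff intro!: finite_PiE)
    finally show ?thesis .
  qed
  have "\<bar>avg ?V f * avg ?P G\<bar>^2 = (avg ?V f)^2 * \<bar>avg ?P G\<bar>^2"
    by (simp add: abs_mult power_mult_distrib)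
  also have "\<dots> \<le> (avg ?V f)^2 * 1"
    using Gb by (intro mult_left_mono) (auto simp: abs_square_le_1)
  finally show ?case using e GA_one[of n f] by (simp del: GA.simps)
next
  case (insert k I)
  let ?V = "cube n" and ?P = "PiE (J - {k}) (\<lambda>_. cube n)" and ?PJ = "PiE J (\<lambda>_. cube n)"
  have kJ: "k \<in> J" using insert by auto
  have finJ: "finite J" using insert by auto
  have finP: "finite ?P" using finJ by (intro finite_PiE) auto
  have neP: "?P \<noteq> {}" by (auto simp: PiE_eq_empty_iff)
  define Qk where "Qk = {q\<in>Q. sg q = k}"
  define Qr where "Qr = Q - Qk"
  have QkQ: "Qk \<subseteq> Q" and finQ: "finite Q" using insert by (auto simp: Qk_def)
  define G where "G u = (\<Prod>q\<in>Qk. hh q (u(k := vzero)))" for u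
  define a where "a u z = f (vadd c (vadd z (vsum I u))) * (\<Prod>q\<in>Qr. hh q (u(k := z)))" for u z
  have froz: "hh q (u(k := z)) = hh q (u(k := vzero))"
    if "q \<in> Qk" "u \<in> ?P" "z \<in> ?V" for q u z
  proof -
    have x: "u(k := vzero) \<in> ?PJ" using PiE_upd_mem[OF that(2) kJ] by simp
    have "sg q = k" "q \<in> Q" using that by (auto simp: Qk_def)
    then show ?thesis using insert.prems(7)[OF _ x that(3)] by (metis fun_upd_upd)
  qed
  have E1: "avg ?PJ (\<lambda>x. f (vadd c (vsum (insert k I) x)) * (\<Prod>q\<in>Q. hh q x))
      = avg ?P (\<lambda>u. G u * avg ?V (a u))"
    unfolding avg_split[OF finJ kJ] avg_cmult[symmetric]
  proof (intro avg_cong)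
    fix u z assume u: "u \<in> ?P" and z: "z \<in> ?V"
    have pk: "(\<Prod>q\<in>Qk. hh q (u(k := z))) = G u"
      unfolding G_def by (rule prod.cong[OF refl]) (rule froz[OF _ u z])
    have pQ: "(\<Prod>q\<in>Q. hh q (u(k := z))) = (\<Prod>q\<in>Qk. hh q (u(k := z))) * (\<Prod>q\<in>Qr. hh q (u(k := z)))"
      unfolding Qr_def using prod.subset_diff[OF QkQ finQ] by (simp add: mult.commute)
    have vs: "vsum (insert k I) (u(k := z)) = vadd z (vsum I u)"
    proof -
      have "vsum (insert k I) (u(k := z)) = vadd z (vsum I (u(k := z)))"
        using insert.hyps by (simp add: vsum_insert)
      also have "vsum I (u(k := z)) = vsum I u" using insert.hyps by (intro vsum_cong) auto
      finally show ?thesis .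
    qed
    show "f (vadd c (vsum (insert k I) (u(k := z)))) * (\<Prod>q\<in>Q. hh q (u(k := z))) = G u * a u z"
      unfolding a_def vs pQ pk by simp
  qed
  define A where "A u = avg ?V (a u)" for u
  have E2: "\<bar>avg ?P (\<lambda>u. G u * A u)\<bar>^2 \<le> avg ?P (\<lambda>u. (A u)^2)"
  proof -
    have "\<bar>avg ?P (\<lambda>u. G u * A u)\<bar> \<le> avg ?P (\<lambda>u. \<bar>G u * A u\<bar>)" by (rule avg_abs)
    also have "\<dots> \<le> avg ?P (\<lambda>u. \<bar>A u\<bar>)"
    proof (rule avg_mono)
      fix u assume u: "u \<in> ?P"
      have x: "u(k := vzero) \<in> ?PJ" using PiE_upd_mem[OF u kJ] by simp
      have "\<bar>G u\<bar> \<le> 1" unfolding G_def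
        by (rule prod_abs_le1) (rule insert.prems(6)[OF _ x], use QkQ in auto)
      then show "\<bar>G u * A u\<bar> \<le> \<bar>A u\<bar>"
        by (simp add: abs_mult mult_left_le_one_le)
    qed
    finally have "\<bar>avg ?P (\<lambda>u. G u * A u)\<bar>^2 \<le> (avg ?P (\<lambda>u. \<bar>A u\<bar>))^2"
      by (intro power_mono) auto
    also have "\<dots> \<le> avg ?P (\<lambda>u. \<bar>A u\<bar>^2)" by (rule avg_CS[OF finP neP])
    finally show ?thesis by simp
  qed
  have E3: "(A u)^2 = avg ?V (\<lambda>z. avg ?V (\<lambda>h. a u z * a u (vadd z h)))" for u
  proof -
    have "(A u)^2 = avg ?V (\<lambda>z. a u z * A u)"
      unfolding A_def by (simp add: avg_multc power2_eq_square)
    also have "\<dots> = avg ?V (\<lambda>z. avg ?V (\<lambda>h. a u z * a u (vadd z h)))"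
      unfolding A_def by (intro avg_cong) (simp add: avg_cmult avg_translate)
    finally show ?thesis .
  qed
  define B where "B h z = avg ?P (\<lambda>u. a u z * a u (vadd z h))" for h z
  have E4: "avg ?P (\<lambda>u. (A u)^2) = avg ?V (\<lambda>h. avg ?V (\<lambda>z. B h z))"
  proof -
    have "avg ?P (\<lambda>u. (A u)^2) = avg ?P (\<lambda>u. avg ?V (\<lambda>z. avg ?V (\<lambda>h. a u z * a u (vadd z h))))"
      by (simp add: E3)
    also have "\<dots> = avg ?V (\<lambda>z. avg ?P (\<lambda>u. avg ?V (\<lambda>h. a u z * a u (vadd z h))))"
      by (rule avg_swap)
    also have "\<dots> = avg ?V (\<lambda>z. avg ?V (\<lambda>h. avg ?P (\<lambda>u. a u z * a u (vadd z h))))"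
      by (intro avg_cong avg_swap)
    also have "\<dots> = avg ?V (\<lambda>h. avg ?V (\<lambda>z. B h z))"
      unfolding B_def by (rule avg_swap)
    finally show ?thesis .
  qed
  have E5: "\<bar>B h z\<bar> ^ (2 ^ card I) \<le> GA n (card I) (\<lambda>y. f y * f (vadd y h))"
    if h: "h \<in> ?V" and z: "z \<in> ?V" for h z
  proof -
    define hh' where "hh' q u = hh q (u(k := z)) * hh q (u(k := vadd z h))" for q u
    have "B h z = avg ?P (\<lambda>u. (\<lambda>y. f y * f (vadd y h)) (vadd (vadd c z) (vsum I u)) * (\<Prod>q\<in>Qr. hh' q u))"
      unfolding B_def
    proof (intro avg_cong)
      fix u
      have "vadd c (vadd (vadd z h) (vsum I u)) = vadd (vadd (vadd c z) (vsum I u)) h"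
           "vadd c (vadd z (vsum I u)) = vadd (vadd c z) (vsum I u)"
        unfolding vadd_def by auto
      then show "a u z * a u (vadd z h) =
          (\<lambda>y. f y * f (vadd y h)) (vadd (vadd c z) (vsum I u)) * (\<Prod>q\<in>Qr. hh' q u)"
        unfolding a_def hh'_def by (simp add: prod.distrib)
    qed
    also have "\<bar>\<dots>\<bar> ^ (2 ^ card I) \<le> GA n (card I) (\<lambda>y. f y * f (vadd y h))"
    proof (rule insert.IH)
      show "finite (J - {k})" using finJ by simp
      show "I \<subseteq> J - {k}" using insert by auto
      show "vadd c z \<in> ?V" using insert.prems(3) z by simp
      show "finite Qr" using finQ by (simp add: Qr_def)
      show "sg q \<in> I" if "q \<in> Qr" for q
        using that insert.prems(5)[of q] by (auto simp: Qr_def Qk_def)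
      show "\<bar>hh' q u\<bar> \<le> 1" if "q \<in> Qr" "u \<in> ?P" for q u
      proof -
        have "q \<in> Q" using that by (simp add: Qr_def)
        then have "\<bar>hh q (u(k := z))\<bar> \<le> 1" "\<bar>hh q (u(k := vadd z h))\<bar> \<le> 1"
          using insert.prems(6) PiE_upd_mem[OF that(2) kJ] z h vadd_cube[OF z h] by meson+
        then show ?thesis unfolding hh'_def by (simp add: abs_mult mult_le_one)
      qed
      show "hh' q (u(sg q := y)) = hh' q u" if "q \<in> Qr" "u \<in> ?P" "y \<in> ?V" for q u y
      proof -
        have q: "q \<in> Q" "sg q \<noteq> k" using that by (auto simp: Qr_def Qk_def)
        have "hh q ((u(k := w))(sg q := y)) = hh q (u(k := w))" if "w \<in> ?V" for w
          using insert.prems(7)[OF q(1) PiE_upd_mem[OF \<open>u \<in> ?P\<close> kJ that] \<open>y \<in> ?V\<close>] .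
        moreover have "(u(sg q := y))(k := w) = (u(k := w))(sg q := y)" for w
          using q(2) by (rule fun_upd_twist)
        ultimately show ?thesis unfolding hh'_def using z h by simp
      qed
    qed
    finally show ?thesis .
  qed
  let ?m = "card I"
  have "\<bar>avg ?PJ (\<lambda>x. f (vadd c (vsum (insert k I) x)) * (\<Prod>q\<in>Q. hh q x))\<bar> ^ (2 ^ card (insert k I))
      = (\<bar>avg ?P (\<lambda>u. G u * A u)\<bar>^2) ^ (2 ^ ?m)"
    using insert.hyps unfolding E1 A_def by (simp add: power_mult[symmetric] mult.commute power_even_abs)
  also have "\<dots> \<le> (avg ?V (\<lambda>h. avg ?V (\<lambda>z. B h z))) ^ (2 ^ ?m)"
    using E2 E4 by (intro power_mono) auto
  also have "\<dots> \<le> \<bar>avg ?V (\<lambda>h. avg ?V (\<lambda>z. B h z))\<bar> ^ (2 ^ ?m)"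
  proof -
    have "0 \<le> \<bar>avg ?P (\<lambda>u. G u * A u)\<bar>^2" by simp
    then have "0 \<le> avg ?V (\<lambda>h. avg ?V (\<lambda>z. B h z))" using E2 E4 by linarith
    then show ?thesis by simp
  qed
  also have "\<dots> \<le> avg ?V (\<lambda>h. \<bar>avg ?V (\<lambda>z. B h z)\<bar> ^ (2 ^ ?m))"
    by (rule avg_jensen) auto
  also have "\<dots> \<le> avg ?V (\<lambda>h. avg ?V (\<lambda>z. \<bar>B h z\<bar> ^ (2 ^ ?m)))"
    by (intro avg_mono avg_jensen) auto
  also have "\<dots> \<le> avg ?V (\<lambda>h. avg ?V (\<lambda>z. GA n ?m (\<lambda>y. f y * f (vadd y h))))"
    by (intro avg_mono E5)
  also have "\<dots> = avg ?V (\<lambda>h. GA n ?m (\<lambda>y. f y * f (vadd y h)))"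
    by (intro avg_cong avg_const) auto
  also have "\<dots> = GA n (card (insert k I)) f"
    using insert.hyps by simp
  finally show ?case .
qed



definition ae :: "((nat \<Rightarrow> bool) \<Rightarrow> real) \<Rightarrow> nat set \<Rightarrow> (nat \<Rightarrow> nat \<Rightarrow> bool) \<Rightarrow> real" where
  "ae f e x = f vzero ^ (card e + 1) * ((\<Prod>i\<in>e. f (x i)) * f (vsum e x))"

lemma abs_f1:
  fixes f :: "(nat \<Rightarrow> bool) \<Rightarrow> real"
  assumes "\<forall>x\<in>cube n. f x \<in> {-1, 1}" "y \<in> cube n"
  shows "\<bar>f y\<bar> = 1"
proof -
  have "f y = -1 \<or> f y = 1" using assms by auto
  then show ?thesis by auto
qed

lemma PiE_cube_mem: "x \<in> PiE J (\<lambda>_. cube n) \<Longrightarrow> i \<in> J \<Longrightarrow> x i \<in> cube n"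
  by (auto simp: PiE_def Pi_def)

lemma abs_ae:
  assumes f_pm: "\<forall>x\<in>cube n. f x \<in> {-1, 1}" and e: "e \<subseteq> J" and x: "x \<in> PiE J (\<lambda>_. cube n)"
  shows "\<bar>ae f e x\<bar> = 1"
proof -
  have "\<bar>f vzero\<bar> = 1" by (rule abs_f1[OF f_pm]) simp
  moreover have "\<bar>f (x i)\<bar> = 1" if "i \<in> e" for i
    using abs_f1[OF f_pm PiE_cube_mem[OF x]] that e by auto
  moreover have "\<bar>f (vsum e x)\<bar> = 1"
    using abs_f1[OF f_pm vsum_cube[of e x n]] PiE_cube_mem[OF x] e by auto
  ultimately show ?thesis unfolding ae_def by (simp add: abs_mult power_abs abs_prod)
qed

lemma key:
  assumes f_pm: "\<forall>x\<in>cube n. f x \<in> {-1, 1}"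
    and F: "F \<noteq> {}" "finite F" and edges: "\<forall>e\<in>F. e \<subseteq> {1..t} \<and> 2 \<le> card e"
    and dF: "\<forall>e\<in>F. card e \<le> d"
  shows "\<bar>avg (PiE {1..t} (\<lambda>_. cube n)) (\<lambda>x. \<Prod>e\<in>F. ae f e x)\<bar> \<le> root (2^d) (GA n d f)"
proof -
  let ?V = "cube n" and ?P = "PiE {1..t} (\<lambda>_. cube n)"
  have "Max (card ` F) \<in> card ` F" using F by (intro Max_in) auto
  then obtain e0 where e0: "e0 \<in> F" "card e0 = Max (card ` F)" by auto
  define k where "k = card e0"
  have kmax: "card e \<le> k" if "e \<in> F" for e
    using that F e0 unfolding k_def by auto
  have e0J: "e0 \<subseteq> {1..t}" and k2: "2 \<le> k" using edges e0 by (auto simp: k_def)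
  have kd: "k \<le> d" using dF e0 by (auto simp: k_def)
  have fine0: "finite e0" using e0J finite_subset by blast
  have ne0: "e0 \<noteq> {}" using k2 k_def by auto
  define Q where "Q = (F - {e0}) <+> e0"
  define sg where "sg = case_sum (\<lambda>e. SOME j. j \<in> e0 \<and> j \<notin> e) (\<lambda>i. SOME j. j \<in> e0 \<and> j \<noteq> i)"
  define hh where "hh = case_sum (\<lambda>e x. ae f e x) (\<lambda>i x. f (x i))"
  have ex1: "\<exists>j. j \<in> e0 \<and> j \<notin> e" if "e \<in> F - {e0}" for e
  proof (rule ccontr)
    assume "\<not> ?thesis"
    then have sub: "e0 \<subseteq> e" by auto
    have fe: "finite e" using edges that finite_subset[of e "{1..t}"] by auto
    have "card e0 \<le> card e" using card_mono[OF fe sub] .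
    moreover have "card e \<le> card e0" using kmax that k_def by auto
    ultimately have "e0 = e" using card_subset_eq[OF fe sub] by auto
    then show False using that by auto
  qed
  have ex2: "\<exists>j. j \<in> e0 \<and> j \<noteq> i" if "i \<in> e0" for i
  proof (rule ccontr)
    assume "\<not> ?thesis"
    then have "e0 \<subseteq> {i}" by auto
    then have "card e0 \<le> 1" using card_mono[of "{i}" e0] by auto
    then show False using k2 k_def by auto
  qed
  have gcs_app: "\<bar>avg ?P (\<lambda>x. f (vadd vzero (vsum e0 x)) * (\<Prod>q\<in>Q. hh q x))\<bar> ^ (2 ^ card e0) \<le> GA n (card e0) f"
  proof (rule gcs[OF fine0 ne0])
    show "finite {1..t}" by simp
    show "e0 \<subseteq> {1..t}" by (rule e0J)
    show "vzero \<in> ?V" by simp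
    show "finite Q" unfolding Q_def using F fine0 by simp
    show "sg q \<in> e0" if "q \<in> Q" for q
    proof -
      from that have "(\<exists>e\<in>F-{e0}. q = Inl e) \<or> (\<exists>i\<in>e0. q = Inr i)" unfolding Q_def by auto
      then show ?thesis
      proof (elim disjE bexE)
        fix e assume "e \<in> F - {e0}" "q = Inl e"
        then show ?thesis unfolding sg_def using someI_ex[OF ex1[of e]] by auto
      next
        fix i assume "i \<in> e0" "q = Inr i"
        then show ?thesis unfolding sg_def using someI_ex[OF ex2[of i]] by auto
      qed
    qed
    show "\<bar>hh q x\<bar> \<le> 1" if "q \<in> Q" "x \<in> ?P" for q x
    proof -
      have A: "\<bar>ae f e x\<bar> \<le> 1" if "e \<in> F - {e0}" for e
        using abs_ae[OF f_pm _ \<open>x \<in> ?P\<close>, of e] edges that by auto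
      have B: "\<bar>f (x i)\<bar> \<le> 1" if "i \<in> e0" for i
        using abs_f1[OF f_pm PiE_cube_mem[OF \<open>x \<in> ?P\<close>, of i]] e0J that by auto
      from that(1) have "(\<exists>e\<in>F-{e0}. q = Inl e) \<or> (\<exists>i\<in>e0. q = Inr i)" unfolding Q_def by auto
      then show ?thesis
      proof (elim disjE bexE)
        fix e assume "e \<in> F - {e0}" "q = Inl e" then show ?thesis using A unfolding hh_def by simp
      next
        fix i assume "i \<in> e0" "q = Inr i" then show ?thesis using B unfolding hh_def by simp
      qed
    qed
    show "hh q (x(sg q := z)) = hh q x" if "q \<in> Q" "x \<in> ?P" "z \<in> ?V" for q x z
    proof -
      { fix e assume e: "e \<in> F - {e0}"
        define j where "j = (SOME j. j \<in> e0 \<and> j \<notin> e)"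
        have "j \<notin> e" unfolding j_def using someI_ex[OF ex1[OF e]] by blast
        then have "ae f e (x(j := z)) = ae f e x"
        proof -
          have "(\<Prod>i\<in>e. f ((x(j := z)) i)) = (\<Prod>i\<in>e. f (x i))"
            using \<open>j \<notin> e\<close> by (intro prod.cong) auto
          moreover have "vsum e (x(j := z)) = vsum e x"
            using \<open>j \<notin> e\<close> by (intro vsum_cong) auto
          ultimately show ?thesis by (simp add: ae_def)
        qed
        moreover have "sg (Inl e) = j" unfolding sg_def j_def by simp
        ultimately have "hh (Inl e) (x(sg (Inl e) := z)) = hh (Inl e) x"
          unfolding hh_def by simp }
      moreover
      { fix i assume i: "i \<in> e0"
        define j where "j = (SOME j. j \<in> e0 \<and> j \<noteq> i)"
        have "j \<noteq> i" unfolding j_def using someI_ex[OF ex2[OF i]] by blast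
        moreover have "sg (Inr i) = j" unfolding sg_def j_def by simp
        ultimately have "hh (Inr i) (x(sg (Inr i) := z)) = hh (Inr i) x"
          unfolding hh_def by simp }
      moreover from that(1) have "(\<exists>e\<in>F-{e0}. q = Inl e) \<or> (\<exists>i\<in>e0. q = Inr i)" unfolding Q_def by auto
      ultimately show ?thesis by blast
    qed
  qed
  have phi: "(\<Prod>e\<in>F. ae f e x) = f vzero ^ (k + 1) * (f (vadd vzero (vsum e0 x)) * (\<Prod>q\<in>Q. hh q x))" for x
  proof -
    have "(\<Prod>e\<in>F. ae f e x) = ae f e0 x * (\<Prod>e\<in>F - {e0}. ae f e x)"
      using prod.remove[OF F(2) e0(1)] by simp
    moreover have "(\<Prod>q\<in>Q. hh q x) = (\<Prod>e\<in>F - {e0}. ae f e x) * (\<Prod>i\<in>e0. f (x i))"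
      unfolding Q_def using F fine0 by (simp add: prod.Plus hh_def comp_def)
    ultimately show ?thesis unfolding ae_def k_def by (simp add: ac_simps)
  qed
  have absc: "\<bar>f vzero ^ (k + 1)\<bar> = 1"
    using abs_f1[OF f_pm vzero_cube] by (simp only: power_abs) simp
  have "\<bar>avg ?P (\<lambda>x. \<Prod>e\<in>F. ae f e x)\<bar> = \<bar>avg ?P (\<lambda>x. f (vadd vzero (vsum e0 x)) * (\<Prod>q\<in>Q. hh q x))\<bar>"
    unfolding phi avg_cmult abs_mult absc by simp
  also have "\<dots> = root (2^k) (\<bar>avg ?P (\<lambda>x. f (vadd vzero (vsum e0 x)) * (\<Prod>q\<in>Q. hh q x))\<bar> ^ (2^k))"
    by (simp add: real_root_power_cancel)
  also have "\<dots> \<le> root (2^k) (GA n k f)"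
    using gcs_app k_def by simp
  also have "\<dots> \<le> root (2^d) (GA n d f)"
    using GA_root_mono[of k d n f] k2 kd by simp
  finally show ?thesis .
qed



lemma avg_sum: "avg A (\<lambda>x. \<Sum>F\<in>S. g F x) = (\<Sum>F\<in>S. avg A (g F))"
  unfolding avg_def by (simp add: sum.swap[of _ A S] sum_divide_distrib)

lemma avg_div: "avg A (\<lambda>x. g x / c) = avg A g / c"
  unfolding avg_def by (simp add: sum_divide_distrib mult.commute)

lemma real_card_filter: "finite A \<Longrightarrow> real (card {x\<in>A. C x}) = (\<Sum>x\<in>A. if C x then 1 else 0)"
  by (simp add: sum.inter_filter[symmetric])

lemma ind_pt:
  fixes f :: "(nat \<Rightarrow> bool) \<Rightarrow> real"
  assumes f_pm: "\<forall>x\<in>cube n. f x \<in> {-1, 1}" and e: "e \<subseteq> J" and x: "x \<in> PiE J (\<lambda>_. cube n)"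
  shows "(1 + ae f e x) / 2 = (if (\<Prod>i\<in>e. f (x i)) * f (vsum e x) = f vzero ^ (card e + 1) then 1 else 0)"
proof -
  define s where "s = f vzero ^ (card e + 1)"
  define p where "p = (\<Prod>i\<in>e. f (x i)) * f (vsum e x)"
  have s1: "\<bar>s\<bar> = 1" unfolding s_def
    using abs_f1[OF f_pm vzero_cube] by (simp only: power_abs) simp
  have a1: "\<bar>s * p\<bar> = 1" using abs_ae[OF f_pm e x] unfolding ae_def s_def p_def .
  then have p1: "\<bar>p\<bar> = 1" using s1 by (simp add: abs_mult)
  have "ae f e x = s * p" unfolding ae_def s_def p_def ..
  moreover have "(1 + s * p) / 2 = (if p = s then 1 else 0)"
    using s1 p1 by (auto simp: abs_if split: if_splits)
  ultimately show ?thesis unfolding s_def p_def by simp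
qed

lemma theorem_main:
  fixes n t :: nat and E :: "nat set set" and f :: "(nat \<Rightarrow> bool) \<Rightarrow> real"
  assumes edges: "\<forall>e\<in>E. e \<subseteq> {1..t} \<and> 2 \<le> card e"
    and nonempty: "E \<noteq> {}"
    and f_pm: "\<forall>x\<in>cube n. f x \<in> {-1, 1}"
  shows "accept_prob n t E f \<le> 1 / 2 ^ card E + gowers_norm n (Max (card ` E)) f"
proof -
  let ?V = "cube n" and ?P = "PiE {1..t} (\<lambda>_. cube n)"
  define d where "d = Max (card ` E)"
  define U where "U = gowers_norm n d f"
  have finE: "finite E" using edges by (intro finite_subset[of E "Pow {1..t}"]) auto
  have finP: "finite ?P" by (intro finite_PiE) auto
  have neP: "?P \<noteq> {}" by (auto simp: PiE_eq_empty_iff)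
  have dge: "card e \<le> d" if "e \<in> E" for e
    unfolding d_def using finE that by auto
  obtain e1 where "e1 \<in> E" using nonempty by auto
  then have d2: "2 \<le> d" using dge edges by fastforce
  have gw: "U = root (2^d) (GA n d f)"
  proof -
    have "U = root (2^d) (GS n {1..d} f)"
      unfolding U_def gowers_norm_def GS_def avg_def
      by (simp add: sum_divide_distrib[symmetric] mult.commute)
    then show ?thesis by (simp add: GS_eq)
  qed
  have U0: "0 \<le> U"
  proof -
    obtain d' where "d = Suc d'" using d2 by (cases d) auto
    then show ?thesis using gw GA_nonneg[of n d' f] by simp
  qed
  define a where "a e x = ae f e x" for e x
  have pt: "(if \<forall>e\<in>E. (\<Prod>i\<in>e. f (x i)) * f (vsum e x) = f vzero ^ (card e + 1) then 1 else 0)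
      = (\<Sum>F\<in>Pow E. \<Prod>e\<in>F. a e x) / 2 ^ card E" if x: "x \<in> ?P" for x
  proof -
    let ?C = "\<lambda>e. (\<Prod>i\<in>e. f (x i)) * f (vsum e x) = f vzero ^ (card e + 1)"
    have "(if \<forall>e\<in>E. ?C e then 1 else 0) = (\<Prod>e\<in>E. (if ?C e then 1 else 0) :: real)"
    proof (cases "\<forall>e\<in>E. ?C e")
      case True then show ?thesis by simp
    next
      case False
      then obtain e where "e \<in> E" "\<not> ?C e" by auto
      then show ?thesis using False finE by (auto simp: prod_zero_iff)
    qed
    also have "\<dots> = (\<Prod>e\<in>E. (1 + a e x) / 2)"
      using ind_pt[OF f_pm _ x] edges unfolding a_def by (intro prod.cong) auto
    also have "\<dots> = (\<Prod>e\<in>E. a e x + 1) / 2 ^ card E"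
      by (simp add: prod_dividef add.commute)
    also have "(\<Prod>e\<in>E. a e x + 1) = (\<Sum>F\<in>Pow E. \<Prod>e\<in>F. a e x)"
      using prod_add[OF finE, of "\<lambda>e. a e x" "\<lambda>_. 1"] by simp
    finally show ?thesis .
  qed
  have acc: "accept_prob n t E f = (\<Sum>F\<in>Pow E. avg ?P (\<lambda>x. \<Prod>e\<in>F. a e x)) / 2 ^ card E"
  proof -
    have "accept_prob n t E f = avg ?P (\<lambda>x. if \<forall>e\<in>E. (\<Prod>i\<in>e. f (x i)) * f (vsum e x) = f vzero ^ (card e + 1) then 1 else 0)"
      unfolding accept_prob_def avg_def real_card_filter[OF finP] ..
    also have "\<dots> = avg ?P (\<lambda>x. (\<Sum>F\<in>Pow E. \<Prod>e\<in>F. a e x) / 2 ^ card E)"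
      by (intro avg_cong pt)
    finally show ?thesis by (simp add: avg_div avg_sum)
  qed
  have bnd: "(\<Sum>F\<in>Pow E. avg ?P (\<lambda>x. \<Prod>e\<in>F. a e x)) \<le> (\<Sum>F\<in>Pow E. if F = {} then 1 else U)"
  proof (rule sum_mono)
    fix F assume F: "F \<in> Pow E"
    show "avg ?P (\<lambda>x. \<Prod>e\<in>F. a e x) \<le> (if F = {} then 1 else U)"
    proof (cases "F = {}")
      case True then show ?thesis using finP neP by (simp add: avg_const)
    next
      case False
      have "\<bar>avg ?P (\<lambda>x. \<Prod>e\<in>F. ae f e x)\<bar> \<le> root (2^d) (GA n d f)"
        using F False finE edges dge by (intro key[OF f_pm]) (auto intro: finite_subset)
      then show ?thesis using False gw unfolding a_def by simp
    qed
  qed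
  have sumU: "(\<Sum>F\<in>Pow E. if F = {} then 1 else U) = 1 + (2 ^ card E - 1) * U"
  proof -
    have "(\<Sum>F\<in>Pow E. if F = {} then 1 else U) = 1 + (\<Sum>F\<in>Pow E - {{}}. if F = {} then 1 else U)"
      using sum.remove[of "Pow E" "{}" "\<lambda>F. if F = {} then 1 else U"] finE by simp
    also have "(\<Sum>F\<in>Pow E - {{}}. if F = {} then 1 else U) = (\<Sum>F\<in>Pow E - {{}}. U)"
      by (intro sum.cong) auto
    also have "\<dots> = real (card (Pow E - {{}})) * U" by simp
    also have "card (Pow E - {{}}) = 2 ^ card E - 1"
      using finE by (simp add: card_Pow)
    also have "real (2 ^ card E - 1) = 2 ^ card E - 1"
      by (simp add: of_nat_diff)
    finally show ?thesis .
  qed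
  define N :: real where "N = 2 ^ card E"
  have N1: "1 \<le> N" unfolding N_def by simp
  have "accept_prob n t E f \<le> (1 + (N - 1) * U) / N"
    unfolding acc N_def using bnd sumU by (intro divide_right_mono) auto
  also have "\<dots> = 1 / N + U - U / N" using N1 by (simp add: field_simps)
  also have "\<dots> \<le> 1 / N + U" using U0 N1 by simp
  finally show ?thesis unfolding N_def U_def d_def by simp
qed


theorem theorem2p2:
  fixes n t :: nat and E :: "nat set set" and f :: "(nat \<Rightarrow> bool) \<Rightarrow> real"
  assumes edges: "\<forall>e\<in>E. e \<subseteq> {1..t} \<and> 2 \<le> card e"
    and nonempty: "E \<noteq> {}"
    and f_pm: "\<forall>x\<in>cube n. f x \<in> {-1, 1}"
  shows "accept_prob n t E f \<le> 1 / 2 ^ card E + gowers_norm n (Max (card ` E)) f"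
  by (rule theorem_main[OF edges nonempty f_pm])

end
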